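(* Suppose $n$ is even, $f:\{0,1\}^n\to\mathbb{R}$ is submodular, and $f(x)<0$ for some $x$ with $\|x\|_1=n/2$. Then there are at least $2^{n/2}$ points $y\in\{0,1\}^n$ such that $f(y)\neq 0$.
   Context: $f$ is submodular if $f(x+\mathbf{e}_i)-f(x)\ge f(y+\mathbf{e}_i)-f(y)$ for all $i$ and all $x\le y$ (coordinatewise) with $x_i=y_i=0$, where $\mathbf{e}_i$ is the $i$-th standard basis vector. *)

theory Defs
  imports Complex_Main
begin

definition cube :: "nat \<Rightarrow> (nat \<Rightarrow> nat) set" where
  "cube n = {x. (\<forall>i<n. x i \<in> {0,1}) \<and> (\<forall>i\<ge>n. x i = 0)}"

definition unitvec :: "nat \<Rightarrow> (nat \<Rightarrow> nat)" where
  "unitvec i = (\<lambda>j. if j = i then 1 else 0)"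

definition submodular_cube :: "nat \<Rightarrow> ((nat \<Rightarrow> nat) \<Rightarrow> real) \<Rightarrow> bool" where
  "submodular_cube n f \<longleftrightarrow>
     (\<forall>x\<in>cube n. \<forall>y\<in>cube n. \<forall>i<n.
        (\<forall>j. x j \<le> y j) \<and> x i = 0 \<and> y i = 0 \<longrightarrow>
        f (\<lambda>j. x j + unitvec i j) - f x \<ge> f (\<lambda>j. y j + unitvec i j) - f y)"

end

theory Submission
  imports Defs
begin

definition ind :: "nat set \<Rightarrow> nat \<Rightarrow> nat" where
  "ind A = (\<lambda>j. if j \<in> A then 1 else 0)"

lemma ind_inj: "inj ind"
proof (rule injI)
  fix A B assume "ind A = ind B"
  then have "\<And>j. (j \<in> A) = (j \<in> B)" unfolding ind_def by (metis one_neq_zero)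
  then show "A = B" by blast
qed

lemma ind_cube: "A \<subseteq> {..<n} \<Longrightarrow> ind A \<in> cube n"
  unfolding ind_def cube_def by auto

lemma cube_ind: assumes "x \<in> cube n" shows "x = ind {i. i < n \<and> x i = 1}"
proof (rule ext)
  fix j
  have a: "\<forall>i<n. x i \<in> {0,1}" and b: "\<forall>i\<ge>n. x i = 0" using assms unfolding cube_def by auto
  show "x j = ind {i. i < n \<and> x i = 1} j"
  proof (cases "j < n")
    case True then show ?thesis using a unfolding ind_def by auto
  next
    case False then show ?thesis using b unfolding ind_def by auto
  qed
qed

lemma cube_finite: "finite (cube n)"
proof -
  have "cube n \<subseteq> ind ` Pow {..<n}"
    using cube_ind by (smt (verit, best) Collect_mono_iff PowI image_iff lessThan_def subsetI)
  then show ?thesis by (meson finite_Pow_iff finite_imageI finite_lessThan finite_subset)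
qed

lemma ind_add: "i \<notin> A \<Longrightarrow> (\<lambda>j. ind A j + unitvec i j) = ind (insert i A)"
  unfolding ind_def unitvec_def by (rule ext) auto

lemma step:
  assumes sub: "submodular_cube n f" and AB: "A \<subseteq> B" "B \<subseteq> {..<n}" and i: "i < n" "i \<notin> B"
  shows "f (ind (insert i B)) - f (ind B) \<le> f (ind (insert i A)) - f (ind A)"
proof -
  have iA: "i \<notin> A" using AB i by blast
  have "ind A \<in> cube n" "ind B \<in> cube n" using AB by (auto intro: ind_cube)
  moreover have "\<forall>j. ind A j \<le> ind B j" using AB unfolding ind_def by auto
  moreover have "ind A i = 0" "ind B i = 0" using iA i unfolding ind_def by auto
  ultimately have "f (\<lambda>j. ind A j + unitvec i j) - f (ind A) \<ge> f (\<lambda>j. ind B j + unitvec i j) - f (ind B)"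
    using sub i unfolding submodular_cube_def by blast
  then show ?thesis using ind_add[OF iA] ind_add[OF i(2)] by simp
qed

lemma multi:
  assumes sub: "submodular_cube n f" and "finite W"
  shows "A \<subseteq> B \<Longrightarrow> B \<subseteq> {..<n} \<Longrightarrow> W \<subseteq> {..<n} \<Longrightarrow> W \<inter> B = {} \<Longrightarrow>
    f (ind (B \<union> W)) - f (ind B) \<le> f (ind (A \<union> W)) - f (ind A)"
  using assms(2)
proof (induction W rule: finite_induct)
  case empty then show ?case by simp
next
  case (insert i W)
  have "f (ind (insert i (B \<union> W))) - f (ind (B \<union> W)) \<le> f (ind (insert i (A \<union> W))) - f (ind (A \<union> W))"
    using step[OF sub, of "A \<union> W" "B \<union> W" i] insert by auto
  moreover have "f (ind (B \<union> W)) - f (ind B) \<le> f (ind (A \<union> W)) - f (ind A)"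
    using insert by auto
  ultimately show ?case by simp
qed

theorem lemma7:
  fixes n :: nat and f :: "(nat \<Rightarrow> nat) \<Rightarrow> real"
  assumes "even n"
    and "submodular_cube n f"
    and "\<exists>x\<in>cube n. (\<Sum>i<n. x i) = n div 2 \<and> f x < 0"
  shows "card {y \<in> cube n. f y \<noteq> 0} \<ge> 2 ^ (n div 2)"
proof -
  obtain x where x: "x \<in> cube n" "(\<Sum>i<n. x i) = n div 2" "f x < 0" using assms(3) by blast
  define S where "S = {i. i < n \<and> x i = 1}"
  define T where "T = {..<n} - S"
  have xS: "x = ind S" using cube_ind[OF x(1)] S_def by simp
  have Sn: "S \<subseteq> {..<n}" unfolding S_def by auto
  have "(\<Sum>i<n. x i) = (\<Sum>i<n. if i \<in> S then 1 else 0)"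
    using xS unfolding ind_def by simp
  also have "\<dots> = card S" using Sn
    by (simp add: sum.If_cases Int_absorb1)
  finally have cS: "card S = n div 2" using x(2) by simp
  have cT: "card T = n div 2" unfolding T_def using Sn cS assms(1)
    by (simp add: card_Diff_subset finite_subset) presburger
  have fS: "f (ind S) < 0" using x xS by simp
  define N where "N = {y \<in> cube n. f y \<noteq> 0}"
  have finN: "finite N" unfolding N_def using cube_finite by simp
  show ?thesis
  proof (cases "\<forall>U\<subseteq>S. f (ind U) \<noteq> 0")
    case True
    have "ind ` Pow S \<subseteq> N" unfolding N_def using True Sn by (auto intro: ind_cube)
    moreover have "inj_on ind (Pow S)" using ind_inj by (simp add: inj_on_def inj_def)
    ultimately have "card (Pow S) \<le> card N" using finN by (metis card_image card_mono)
    moreover have "card (Pow S) = 2 ^ (n div 2)" using cS Sn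
      by (simp add: card_Pow finite_subset)
    ultimately show ?thesis unfolding N_def by simp
  next
    case False
    then obtain U0 where U0: "U0 \<subseteq> S" "f (ind U0) = 0" by blast
    define h where "h W = (if f (ind (S \<union> W)) \<noteq> 0 then S \<union> W else U0 \<union> W)" for W
    have key: "f (ind (h W)) \<noteq> 0" if "W \<subseteq> T" for W
    proof -
      have "finite W" using that unfolding T_def by (meson finite_Diff finite_lessThan finite_subset)
      then have "f (ind (S \<union> W)) - f (ind S) \<le> f (ind (U0 \<union> W)) - f (ind U0)"
        using multi[OF assms(2), of W U0 S] U0 Sn that unfolding T_def by auto
      then show ?thesis unfolding h_def using fS U0 by auto
    qed
    have hT: "h W \<inter> T = W" if "W \<subseteq> T" for W
      using that U0 unfolding h_def T_def by auto
    have hsub: "h W \<subseteq> {..<n}" if "W \<subseteq> T" for W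
      using that U0 Sn unfolding h_def T_def by auto
    have "inj_on (ind \<circ> h) (Pow T)"
    proof (rule inj_onI)
      fix V W assume "V \<in> Pow T" "W \<in> Pow T" "(ind \<circ> h) V = (ind \<circ> h) W"
      then have "h V = h W" using ind_inj by (simp add: inj_def)
      then show "V = W" using hT \<open>V \<in> Pow T\<close> \<open>W \<in> Pow T\<close> by (metis PowD)
    qed
    moreover have "(ind \<circ> h) ` Pow T \<subseteq> N" unfolding N_def using key hsub by (auto intro: ind_cube)
    ultimately have "card (Pow T) \<le> card N" using finN by (metis card_image card_mono)
    moreover have "card (Pow T) = 2 ^ (n div 2)" using cT unfolding T_def
      by (simp add: card_Pow)
    ultimately show ?thesis unfolding N_def by simp
  qed
qed

end
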